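(* In type $C_\infty$, let $\lambda$ be a partition of $n$ with charge $\kappa\in\mathbb Z$ and let $A$ be a Garnir node of $[\lambda]$. Then there is no row-strict $\lambda$-tableau $\mathsf t$ with $\mathsf t\rhd\mathsf g^A$ and $\mathrm{res}\,\mathsf t=\mathrm{res}\,\mathsf g^A$.
   Context: Residues in type $C_\infty$: node $(r,c)$ of $\lambda$ has residue $|\kappa+c-r|\in\mathbb Z_{\ge0}$; for a tableau $\mathsf t$ (bijection $[\lambda]\to\{1,\dots,n\}$), $\mathrm{res}\,\mathsf t=(\mathrm{res}\,\mathsf t^{-1}(1),\dots,\mathrm{res}\,\mathsf t^{-1}(n))$. Row-strict means entries increase along rows. $\mathsf t^\lambda$ is the initial tableau (entries in order along successive rows), $w^{\mathsf t}\in\mathfrak S_n$ satisfies $w^{\mathsf t}\mathsf t^\lambda=\mathsf t$ ($\mathfrak S_n$ acting on entries). Dominance order on tableaux: $\mathsf t\trianglerighteq\mathsf s$ iff $w^{\mathsf t}\preccurlyeq w^{\mathsf s}$ in Bruhat order; $\mathsf t\rhd\mathsf s$ means $\mathsf t\trianglerighteq\mathsf s$ and $\mathsf t\ne\mathsf s$. A Garnir node is $A=(r,c)$ with $(r+1,c)\in[\lambda]$; the Garnir tableau $\mathsf g^A$ agrees with $\mathsf t^\lambda$ outside the belt $\{(r,a):a\ge c\}\cup\{(r+1,a):a\le c\}$ and fills the belt with $\mathsf t^\lambda(r,c),\dots,\mathsf t^\lambda(r+1,c)$, first along row $r+1$ left to right, then along row $r$ left to right. *)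

theory Defs
  imports Main
begin

definition is_partition :: "nat list \<Rightarrow> nat \<Rightarrow> bool" where
  "is_partition lam n \<longleftrightarrow> sorted (rev lam) \<and> (\<forall>x\<in>set lam. 0 < x) \<and> sum_list lam = n"

definition diagram :: "nat list \<Rightarrow> (nat \<times> nat) set" where
  "diagram lam = {(r, c). 1 \<le> r \<and> r \<le> length lam \<and> 1 \<le> c \<and> c \<le> lam ! (r - 1)}"

(* A lambda-tableau: bijection [lambda] -> {1..n}; normalised to 0 off the diagram,
   so that tableaux are equal iff they agree on [lambda]. *)
definition tableau :: "nat list \<Rightarrow> nat \<Rightarrow> (nat \<times> nat \<Rightarrow> nat) \<Rightarrow> bool" where
  "tableau lam n t \<longleftrightarrow> bij_betw t (diagram lam) {1..n} \<and> (\<forall>x. x \<notin> diagram lam \<longrightarrow> t x = 0)"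

definition row_strict :: "nat list \<Rightarrow> (nat \<times> nat \<Rightarrow> nat) \<Rightarrow> bool" where
  "row_strict lam t \<longleftrightarrow>
     (\<forall>r c c'. (r, c) \<in> diagram lam \<and> (r, c') \<in> diagram lam \<and> c < c' \<longrightarrow> t (r, c) < t (r, c'))"

definition node_res :: "int \<Rightarrow> nat \<times> nat \<Rightarrow> nat" where
  "node_res kappa x = nat \<bar>kappa + int (snd x) - int (fst x)\<bar>"

definition res_seq :: "int \<Rightarrow> nat list \<Rightarrow> nat \<Rightarrow> (nat \<times> nat \<Rightarrow> nat) \<Rightarrow> nat list" where
  "res_seq kappa lam n t = map (\<lambda>k. node_res kappa (the_inv_into (diagram lam) t k)) [1..<n+1]"

definition init_tab :: "nat list \<Rightarrow> nat \<times> nat \<Rightarrow> nat" where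
  "init_tab lam x = (if x \<in> diagram lam then sum_list (take (fst x - 1) lam) + snd x else 0)"

definition perm_of_tab :: "nat list \<Rightarrow> nat \<Rightarrow> (nat \<times> nat \<Rightarrow> nat) \<Rightarrow> nat \<Rightarrow> nat" where
  "perm_of_tab lam n t k = (if k \<in> {1..n} then t (the_inv_into (diagram lam) (init_tab lam) k) else k)"

definition perm_length :: "nat \<Rightarrow> (nat \<Rightarrow> nat) \<Rightarrow> nat" where
  "perm_length n w = card {(i, j). i \<in> {1..n} \<and> j \<in> {1..n} \<and> i < j \<and> w j < w i}"

definition transp :: "nat \<Rightarrow> nat \<Rightarrow> nat \<Rightarrow> nat" where
  "transp i j x = (if x = i then j else if x = j then i else x)"

definition bruhat_step :: "nat \<Rightarrow> (nat \<Rightarrow> nat) \<Rightarrow> (nat \<Rightarrow> nat) \<Rightarrow> bool" where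
  "bruhat_step n u v \<longleftrightarrow> (\<exists>i j. i \<in> {1..n} \<and> j \<in> {1..n} \<and> i < j \<and> v = u \<circ> transp i j
                          \<and> perm_length n u < perm_length n v)"

definition bruhat_le :: "nat \<Rightarrow> (nat \<Rightarrow> nat) \<Rightarrow> (nat \<Rightarrow> nat) \<Rightarrow> bool" where
  "bruhat_le n u v \<longleftrightarrow> (bruhat_step n)\<^sup>*\<^sup>* u v"

definition tab_dom :: "nat list \<Rightarrow> nat \<Rightarrow> (nat \<times> nat \<Rightarrow> nat) \<Rightarrow> (nat \<times> nat \<Rightarrow> nat) \<Rightarrow> bool" where
  "tab_dom lam n t s \<longleftrightarrow> bruhat_le n (perm_of_tab lam n t) (perm_of_tab lam n s)"

definition tab_dom_strict :: "nat list \<Rightarrow> nat \<Rightarrow> (nat \<times> nat \<Rightarrow> nat) \<Rightarrow> (nat \<times> nat \<Rightarrow> nat) \<Rightarrow> bool" where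
  "tab_dom_strict lam n t s \<longleftrightarrow> tab_dom lam n t s \<and> t \<noteq> s"

definition garnir_node :: "nat list \<Rightarrow> nat \<times> nat \<Rightarrow> bool" where
  "garnir_node lam A \<longleftrightarrow> A \<in> diagram lam \<and> (fst A + 1, snd A) \<in> diagram lam"

(* Garnir tableau g^A for A = (r,c): belt filled with t^lam(r,c),...,t^lam(r+1,c),
   first along row r+1 (columns 1..c), then along row r (columns c..lam_r). *)
definition garnir_tab :: "nat list \<Rightarrow> nat \<times> nat \<Rightarrow> nat \<times> nat \<Rightarrow> nat" where
  "garnir_tab lam A x =
     (let r = fst A; c = snd A; a0 = init_tab lam (r, c) in
      if x \<in> diagram lam \<and> fst x = r + 1 \<and> snd x \<le> c then a0 + snd x - 1
      else if x \<in> diagram lam \<and> fst x = r \<and> c \<le> snd x then a0 + snd x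
      else init_tab lam x)"

end

theory Submission
  imports Defs
begin


lemma transp_simps: "transp i j i = j" "transp i j j = i" "x \<noteq> i \<Longrightarrow> x \<noteq> j \<Longrightarrow> transp i j x = x"
  by (auto simp: transp_def)

lemma inv_len:
  assumes "i \<in> {1..n}" "j \<in> {1..n}" "i < j" "u j \<le> u i"
  shows "perm_length n (u \<circ> transp i j) \<le> perm_length n u"
proof -
  define v where "v = u \<circ> transp i j"
  define Iv where "Iv = {(p, q). p \<in> {1..n} \<and> q \<in> {1..n} \<and> p < q \<and> v q < v p}"
  define Iu where "Iu = {(p, q). p \<in> {1..n} \<and> q \<in> {1..n} \<and> p < q \<and> u q < u p}"
  define \<psi> where "\<psi> = (\<lambda>(p::nat, q::nat). if (p = i \<and> q \<le> j) \<or> (q = j \<and> i \<le> p) then (p, q)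
                         else (transp i j p, transp i j q))"
  have fin: "finite Iu" unfolding Iu_def
    by (rule finite_subset[of _ "{1..n} \<times> {1..n}"]) auto
  have img: "\<psi> ` Iv \<subseteq> Iu"
  proof
    fix z assume "z \<in> \<psi> ` Iv"
    then obtain p q where pq: "(p, q) \<in> Iv" "z = \<psi> (p, q)" by auto
    show "z \<in> Iu"
      using pq assms unfolding Iv_def Iu_def \<psi>_def v_def
      by (auto simp: transp_def split: if_splits)
  qed
  have inj: "inj_on \<psi> Iv"
    unfolding inj_on_def
  proof (clarify)
    fix p q p' q'
    assume a: "(p, q) \<in> Iv" "(p', q') \<in> Iv" "\<psi> (p, q) = \<psi> (p', q')"
    show "p = p' \<and> q = q'"
      using a assms unfolding Iv_def \<psi>_def v_def
      by (auto simp: transp_def split: if_splits)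
  qed
  have "card Iv \<le> card Iu" using card_inj_on_le[OF inj img fin] .
  then show ?thesis unfolding perm_length_def Iv_def Iu_def v_def by simp
qed

lemma step_cnt:
  assumes "bruhat_step n u v"
  shows "card {p\<in>{1..k}. v p \<le> m} \<le> card {p\<in>{1..k}. u p \<le> m}"
proof -
  obtain i j where ij: "i \<in> {1..n}" "j \<in> {1..n}" "i < j" "v = u \<circ> transp i j"
    "perm_length n u < perm_length n v"
    using assms unfolding bruhat_step_def by blast
  have lt: "u i < u j"
  proof (rule ccontr)
    assume "\<not> u i < u j"
    then have "u j \<le> u i" by simp
    from inv_len[OF ij(1,2,3) this] ij(4,5) show False by simp
  qed
  show ?thesis
  proof (cases "k < i")
    case True
    then have "{p\<in>{1..k}. v p \<le> m} = {p\<in>{1..k}. u p \<le> m}"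
      using ij by (auto simp: transp_def)
    then show ?thesis by simp
  next
    case False
    show ?thesis
    proof (cases "j \<le> k")
      case True
      have "{p\<in>{1..k}. v p \<le> m} = transp i j ` {p\<in>{1..k}. u p \<le> m}"
      proof (rule set_eqI, rule iffI)
        fix x assume x: "x \<in> {p\<in>{1..k}. v p \<le> m}"
        then have "transp i j x \<in> {p\<in>{1..k}. u p \<le> m}"
          using ij True False by (auto simp: transp_def)
        moreover have "x = transp i j (transp i j x)" by (auto simp: transp_def)
        ultimately show "x \<in> transp i j ` {p\<in>{1..k}. u p \<le> m}" by blast
      next
        fix x assume "x \<in> transp i j ` {p\<in>{1..k}. u p \<le> m}"
        then show "x \<in> {p\<in>{1..k}. v p \<le> m}"
          using ij True False by (auto simp: transp_def)
      qed
      moreover have "inj (transp i j)" unfolding inj_def transp_def by auto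
      ultimately show ?thesis by (simp add: card_image inj_on_subset)
    next
      case F2: False
      have "{p\<in>{1..k}. v p \<le> m} \<subseteq> {p\<in>{1..k}. u p \<le> m}"
        using ij F2 False lt by (auto simp: transp_def)
      then show ?thesis by (simp add: card_mono)
    qed
  qed
qed

lemma bruhat_cnt:
  assumes "bruhat_le n u v"
  shows "card {p\<in>{1..k}. v p \<le> m} \<le> card {p\<in>{1..k}. u p \<le> m}"
  using assms unfolding bruhat_le_def
proof (induction rule: rtranclp_induct)
  case base then show ?case by simp
next
  case (step y z)
  then show ?case using step_cnt[OF step(2), of k m] by linarith
qed



lemma S_mono: "k \<le> k' \<Longrightarrow> sum_list (take k (xs::nat list)) \<le> sum_list (take k' xs)"
proof -
  assume "k \<le> k'"
  then have "take k' xs = take k xs @ take (k'-k) (drop k xs)"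
    by (metis le_add_diff_inverse take_add)
  then show ?thesis by simp
qed

lemma S_suc: "k < length xs \<Longrightarrow> sum_list (take (Suc k) (xs::nat list)) = sum_list (take k xs) + xs!k"
  by (simp add: take_Suc_conv_app_nth)

lemma S_le_n: "sum_list (take k (xs::nat list)) \<le> sum_list xs"
  by (metis append_take_drop_id le_add1 sum_list_append)

lemma diag_iff: "(r, c) \<in> diagram lam \<longleftrightarrow> 1 \<le> r \<and> r \<le> length lam \<and> 1 \<le> c \<and> c \<le> lam ! (r - 1)"
  by (simp add: diagram_def)

lemma init_in: "x \<in> diagram lam \<Longrightarrow> init_tab lam x = sum_list (take (fst x - 1) lam) + snd x"
  by (simp add: init_tab_def)

lemma init_upper:
  assumes "(r, c) \<in> diagram lam"
  shows "sum_list (take (r - 1) lam) + c \<le> sum_list (take r lam)"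
proof -
  have "r - 1 < length lam" "Suc (r - 1) = r" using assms by (auto simp: diag_iff)
  then show ?thesis using S_suc[of "r-1" lam] assms by (auto simp: diag_iff)
qed

lemma init_inj: "inj_on (init_tab lam) (diagram lam)"
proof (rule inj_onI)
  fix x y assume x: "x \<in> diagram lam" and y: "y \<in> diagram lam" and e: "init_tab lam x = init_tab lam y"
  obtain r c where xr: "x = (r, c)" by (cases x)
  obtain r' c' where yr: "y = (r', c')" by (cases y)
  have ex: "sum_list (take (r - 1) lam) + c = sum_list (take (r' - 1) lam) + c'"
    using e x y xr yr by (simp add: init_in)
  have lt: False if "a < a'" "(a, b) \<in> diagram lam" "(a', b') \<in> diagram lam"
    "sum_list (take (a - 1) lam) + b = sum_list (take (a' - 1) lam) + b'" for a b a' b'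
  proof -
    have "sum_list (take (a - 1) lam) + b \<le> sum_list (take a lam)" using init_upper[OF that(2)] .
    also have "\<dots> \<le> sum_list (take (a' - 1) lam)" using S_mono that(1) by simp
    finally show False using that(3,4) by (auto simp: diag_iff)
  qed
  have "r = r'"
    using lt[of r r' c c'] lt[of r' r c' c] ex x y xr yr by (metis linorder_neqE_nat)
  then show "x = y" using ex xr yr by simp
qed

lemma init_range:
  assumes "x \<in> diagram lam"
  shows "init_tab lam x \<in> {1..sum_list lam}"
proof -
  obtain r c where xr: "x = (r, c)" by (cases x)
  have "sum_list (take (r - 1) lam) + c \<le> sum_list (take r lam)" using init_upper assms xr by simp
  also have "\<dots> \<le> sum_list lam" by (rule S_le_n)
  finally show ?thesis using assms xr by (auto simp: init_in diag_iff)
qed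

lemma init_surj:
  assumes "k \<in> {1..sum_list lam}"
  shows "\<exists>x\<in>diagram lam. init_tab lam x = k"
proof -
  define r where "r = (LEAST r. k \<le> sum_list (take r lam))"
  have ex: "k \<le> sum_list (take (length lam) lam)" using assms by simp
  have kr: "k \<le> sum_list (take r lam)" unfolding r_def by (rule LeastI[of _ "length lam"], rule ex)
  have rl: "r \<le> length lam" unfolding r_def by (rule Least_le, rule ex)
  have r0: "r \<noteq> 0" using kr assms by (cases r) auto
  have km: "\<not> k \<le> sum_list (take (r - 1) lam)"
    unfolding r_def by (rule not_less_Least) (use r0 in \<open>simp add: r_def\<close>)
  have sr: "sum_list (take r lam) = sum_list (take (r - 1) lam) + lam ! (r - 1)"
    using S_suc[of "r - 1" lam] r0 rl by simp
  define c where "c = k - sum_list (take (r - 1) lam)"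
  have "(r, c) \<in> diagram lam" using r0 rl km kr sr by (auto simp: diag_iff c_def)
  moreover have "init_tab lam (r, c) = k" using calculation km by (simp add: init_in c_def)
  ultimately show ?thesis by blast
qed

lemma init_bij: "bij_betw (init_tab lam) (diagram lam) {1..sum_list lam}"
  unfolding bij_betw_def using init_inj init_range init_surj by fast


lemma cnt_transfer:
  assumes "sum_list lam = n" "k \<le> n"
  shows "card {p\<in>{1..k}. perm_of_tab lam n f p \<le> m} = card {x\<in>diagram lam. init_tab lam x \<le> k \<and> f x \<le> m}"
proof -
  have bij: "bij_betw (init_tab lam) (diagram lam) {1..n}" using init_bij[of lam] assms(1) by simp
  have inj: "inj_on (init_tab lam) (diagram lam)" using bij by (simp add: bij_betw_def)
  have seq: "init_tab lam ` {x\<in>diagram lam. init_tab lam x \<le> k \<and> f x \<le> m} = {p\<in>{1..k}. perm_of_tab lam n f p \<le> m}"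
  proof (rule set_eqI, rule iffI)
    fix p assume "p \<in> init_tab lam ` {x\<in>diagram lam. init_tab lam x \<le> k \<and> f x \<le> m}"
    then obtain x where x: "x \<in> diagram lam" "init_tab lam x \<le> k" "f x \<le> m" "p = init_tab lam x" by blast
    have pn: "p \<in> {1..n}" unfolding x(4) using bij_betw_apply[OF bij x(1)] .
    have ti: "the_inv_into (diagram lam) (init_tab lam) p = x"
      using the_inv_into_f_f[OF inj x(1)] x(4) by simp
    have "perm_of_tab lam n f p = f x" unfolding perm_of_tab_def ti[symmetric] by (rule if_P[OF pn])
    moreover have "p \<le> k" using x(2,4) by simp
    ultimately show "p \<in> {p\<in>{1..k}. perm_of_tab lam n f p \<le> m}"
      using x(3) pn by simp
  next
    fix p assume p: "p \<in> {p\<in>{1..k}. perm_of_tab lam n f p \<le> m}"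
    then have pk: "p \<in> {1..k}" and pm: "perm_of_tab lam n f p \<le> m" by simp_all
    then have pn: "p \<in> {1..n}" using assms by simp
    define x where "x = the_inv_into (diagram lam) (init_tab lam) p"
    have x1: "x \<in> diagram lam" unfolding x_def
      using the_inv_into_into[OF inj, of p "diagram lam"] pn bij by (simp add: bij_betw_def)
    have x2: "init_tab lam x = p" unfolding x_def using f_the_inv_into_f_bij_betw[OF bij pn] .
    have "perm_of_tab lam n f p = f x" unfolding perm_of_tab_def x_def by (rule if_P[OF pn])
    then have "f x \<le> m" using pm by simp
    then have "x \<in> {x\<in>diagram lam. init_tab lam x \<le> k \<and> f x \<le> m}" using x1 x2 pk by simp
    then show "p \<in> init_tab lam ` {x\<in>diagram lam. init_tab lam x \<le> k \<and> f x \<le> m}"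
      by (rule image_eqI[where f="init_tab lam", OF x2[symmetric]])
  qed
  have "inj_on (init_tab lam) {x\<in>diagram lam. init_tab lam x \<le> k \<and> f x \<le> m}"
    using inj by (rule inj_on_subset) blast
  from card_image[OF this] show ?thesis unfolding seq by simp
qed

lemma prefix_card:
  assumes "sum_list lam = n" "k \<le> n"
  shows "card {x\<in>diagram lam. init_tab lam x \<le> k} = k"
proof -
  have "init_tab lam ` {x\<in>diagram lam. init_tab lam x \<le> k} = {1..k}"
  proof (rule set_eqI, rule iffI)
    fix p assume "p \<in> init_tab lam ` {x\<in>diagram lam. init_tab lam x \<le> k}"
    then show "p \<in> {1..k}" using init_range by fastforce
  next
    fix p assume "p \<in> {1..k}"
    then obtain x where "x \<in> diagram lam" "init_tab lam x = p" using init_surj[of p lam] assms by auto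
    then show "p \<in> init_tab lam ` {x\<in>diagram lam. init_tab lam x \<le> k}" using \<open>p \<in> {1..k}\<close> by force
  qed
  moreover have "inj_on (init_tab lam) {x\<in>diagram lam. init_tab lam x \<le> k}"
    using init_inj by (rule inj_on_subset) auto
  ultimately show ?thesis by (metis card_atLeastAtMost card_image diff_Suc_1)
qed



lemma incr_gap:
  assumes "\<And>i j. p \<le> i \<Longrightarrow> i < j \<Longrightarrow> j \<le> q \<Longrightarrow> (f::nat\<Rightarrow>nat) i < f j"
    and "p \<le> i" "i \<le> j" "j \<le> q"
  shows "f i + (j - i) \<le> f j"
  using assms(3,4)
proof (induction j rule: dec_induct)
  case base then show ?case by simp
next
  case (step m)
  have "f m < f (Suc m)" using assms(1)[of m "Suc m"] step assms(2) by simp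
  then show ?case using step by simp
qed

lemma absd: fixes a b :: int assumes "\<bar>a\<bar> = \<bar>b\<bar>" "a \<noteq> b" shows "b = - a"
  using assms by arith

lemma main:
  assumes n: "sum_list lam = n" and gA: "garnir_node lam (r, c)"
  and tab: "tableau lam n t" and rs: "row_strict lam t"
  and dom: "tab_dom lam n t (garnir_tab lam (r,c))"
  and res: "res_seq kappa lam n t = res_seq kappa lam n (garnir_tab lam (r,c))"
  shows "t = garnir_tab lam (r,c)"
proof -
  define D where "D = diagram lam"
  define ini where "ini = init_tab lam"
  define g where "g = garnir_tab lam (r,c)"
  define S0 where "S0 = sum_list (take (r-1) lam)"
  define N where "N = lam ! (r-1)"
  define a0 where "a0 = S0 + c"
  define b where "b = a0 + N"
  define belt where "belt x \<longleftrightarrow> x \<in> D \<and> ((fst x = r+1 \<and> snd x \<le> c) \<or> (fst x = r \<and> c \<le> snd x))" for x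
  have rc: "1 \<le> r" "r + 1 \<le> length lam" "1 \<le> c" "c \<le> N" "c \<le> lam ! r"
    using gA by (auto simp: garnir_node_def diag_iff N_def)
  have Sr: "sum_list (take r lam) = S0 + N"
    using S_suc[of "r-1" lam] rc by (simp add: S0_def N_def)
  have Sr1: "sum_list (take (r+1) lam) = S0 + N + lam ! r"
    using S_suc[of "r" lam] rc Sr by simp
  have iniA: "ini (r, c) = a0" using gA by (simp add: ini_def init_in garnir_node_def a0_def S0_def)
  have D1: "(r+1, l) \<in> D" if "1 \<le> l" "l \<le> c" for l using that rc by (auto simp: D_def diag_iff)
  have D2: "(r, j) \<in> D" if "c \<le> j" "j \<le> N" for j using that rc by (auto simp: D_def diag_iff N_def)
  have g1: "g (r+1, l) = a0 + l - 1" if "1 \<le> l" "l \<le> c" for l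
    using D1[OF that] iniA that unfolding g_def garnir_tab_def Let_def by (simp add: D_def ini_def)
  have g2: "g (r, j) = a0 + j" if "c \<le> j" "j \<le> N" for j
    using D2[OF that] iniA that unfolding g_def garnir_tab_def Let_def by (simp add: D_def ini_def)
  have g3: "g x = ini x" if "\<not> belt x" for x
    using that unfolding g_def garnir_tab_def Let_def belt_def by (auto simp: D_def ini_def)
  have ini1: "ini (r+1, l) = S0 + N + l" if "1 \<le> l" "l \<le> c" for l
    using D1[OF that] Sr by (simp add: D_def ini_def init_in)
  have ini2: "ini (r, j) = S0 + j" if "c \<le> j" "j \<le> N" for j
    using D2[OF that] by (simp add: D_def ini_def init_in S0_def)
  have ini_belt: "a0 \<le> ini x \<and> ini x \<le> b" if "belt x" for x
  proof -
    obtain r' c' where x: "x = (r', c')" by (cases x)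
    show ?thesis
      using that rc ini1[of c'] ini2[of c'] unfolding belt_def x a0_def b_def
      by (auto simp: D_def diag_iff N_def)
  qed
  have ini_nb: "ini x < a0 \<or> b < ini x" if "x \<in> D" "\<not> belt x" for x
  proof -
    obtain r' c' where x: "x = (r', c')" by (cases x)
    have ix: "ini x = sum_list (take (r'-1) lam) + c'" using that(1) x by (simp add: D_def ini_def init_in)
    have xd: "1 \<le> r'" "1 \<le> c'" using that(1) x by (auto simp: D_def diag_iff)
    consider "r' < r" | "r' = r" | "r' = r + 1" | "r + 1 < r'" by linarith
    then show ?thesis
    proof cases
      case 1
      have "ini x \<le> sum_list (take r' lam)" using ix init_upper[of r' c' lam] that(1) x by (simp add: D_def)
      also have "\<dots> \<le> S0" unfolding S0_def using 1 by (intro S_mono) simp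
      finally show ?thesis using rc by (simp add: a0_def)
    next
      case 2
      then have "c' < c" using that x by (auto simp: belt_def)
      then show ?thesis using ix 2 by (simp add: a0_def S0_def)
    next
      case 3
      then have "c < c'" using that x by (auto simp: belt_def)
      then show ?thesis using ix 3 Sr by (simp add: a0_def b_def)
    next
      case 4
      have "sum_list (take (r+1) lam) \<le> sum_list (take (r'-1) lam)" using 4 by (intro S_mono) simp
      then show ?thesis using ix Sr1 rc xd by (simp add: a0_def b_def)
    qed
  qed
  have bn: "b \<le> n"
  proof -
    have "b = ini (r+1, c)" using ini1[of c] rc by (simp add: a0_def b_def)
    also have "\<dots> \<le> n" using init_range[of "(r+1,c)" lam] D1[of c] rc n by (simp add: D_def ini_def)
    finally show ?thesis .
  qed
  have tb: "bij_betw t D {1..n}" and toff: "\<And>x. x \<notin> D \<Longrightarrow> t x = 0"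
    using tab by (auto simp: tableau_def D_def)
  have tinj: "inj_on t D" using tb by (simp add: bij_betw_def)
  have trange: "x \<in> D \<Longrightarrow> t x \<in> {1..n}" for x using tb by (auto simp: bij_betw_def)
  have inib: "bij_betw ini D {1..n}" using init_bij[of lam] n by (simp add: ini_def D_def)
  have inii: "the_inv_into D ini v \<in> D \<and> ini (the_inv_into D ini v) = v" if "v \<in> {1..n}" for v
    using inib that by (auto intro: the_inv_into_into f_the_inv_into_f_bij_betw simp: bij_betw_def)
  define phi where "phi x = (if fst x = r + 1 then snd x - 1 else snd x)" for x :: "nat \<times> nat"
  have gphi: "g x = a0 + phi x" if "belt x" for x
  proof -
    obtain r' c' where x: "x = (r', c')" by (cases x)
    show ?thesis using that g1[of c'] g2[of c'] rc unfolding belt_def x phi_def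
      by (auto simp: D_def diag_iff N_def)
  qed
  have phib: "phi x \<le> N" if "belt x" for x
  proof -
    obtain r' c' where x: "x = (r', c')" by (cases x)
    show ?thesis using that rc unfolding belt_def phi_def x by (auto simp: D_def diag_iff N_def)
  qed
  have phi_inj: "x = y" if "belt x" "belt y" "phi x = phi y" for x y
  proof -
    obtain r' c' where x: "x = (r', c')" by (cases x)
    obtain r'' c'' where y: "y = (r'', c'')" by (cases y)
    show ?thesis using that rc unfolding belt_def phi_def x y by (auto simp: D_def diag_iff N_def)
  qed
  have ginj: "inj_on g D"
  proof (rule inj_onI)
    fix x y assume xy: "x \<in> D" "y \<in> D" "g x = g y"
    show "x = y"
    proof (cases "belt x"; cases "belt y")
      assume "belt x" "belt y" then show ?thesis using xy gphi[of x] gphi[of y] phi_inj[of x y] by simp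
    next
      assume "belt x" "\<not> belt y" then show ?thesis
        using xy gphi[of x] phib[of x] g3[of y] ini_nb[of y] b_def by force
    next
      assume "\<not> belt x" "belt y" then show ?thesis
        using xy gphi[of y] phib[of y] g3[of x] ini_nb[of x] b_def by force
    next
      assume "\<not> belt x" "\<not> belt y" then show ?thesis
        using xy g3 init_inj[of lam] by (auto simp: ini_def D_def inj_on_def)
    qed
  qed
  have cnt: "card {x\<in>D. ini x \<le> k \<and> g x \<le> m} \<le> card {x\<in>D. ini x \<le> k \<and> t x \<le> m}" if "k \<le> n" for k m
    using bruhat_cnt[of n "perm_of_tab lam n t" "perm_of_tab lam n g" k m] dom
      cnt_transfer[OF n that, of g m] cnt_transfer[OF n that, of t m]
    by (simp add: tab_dom_def g_def D_def ini_def)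
  have pre: "t x \<le> k" if k: "k \<le> n" "k < a0 \<or> b \<le> k" and x: "x \<in> D" "ini x \<le> k" for k x
  proof -
    have ge: "g y \<le> k" if "y \<in> D" "ini y \<le> k" for y
    proof (cases "belt y")
      case True
      then show ?thesis using gphi[OF True] phib[OF True] ini_belt[OF True] k that by (auto simp: b_def)
    next
      case False
      then show ?thesis using g3 that by simp
    qed
    have e1: "{y\<in>D. ini y \<le> k \<and> g y \<le> k} = {y\<in>D. ini y \<le> k}" using ge by auto
    have c1: "card {y\<in>D. ini y \<le> k} = k" using prefix_card[OF n k(1)] by (simp add: D_def ini_def)
    have "card {y\<in>D. ini y \<le> k} \<le> card {y\<in>D. ini y \<le> k \<and> t y \<le> k}"
      using cnt[OF k(1), of k] e1 by simp
    moreover have "finite {y\<in>D. ini y \<le> k}"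
      using inib bij_betw_finite[of ini D "{1..n}"] by simp
    ultimately have "{y\<in>D. ini y \<le> k \<and> t y \<le> k} = {y\<in>D. ini y \<le> k}"
      by (intro card_seteq) auto
    then show ?thesis using x by blast
  qed
  have low: "\<forall>x\<in>D. ini x = v \<longrightarrow> v < a0 \<longrightarrow> t x = v" for v
  proof (induction v rule: less_induct)
    case (less v)
    show ?case
    proof (intro ballI impI)
      fix x assume x: "x \<in> D" "ini x = v" "v < a0"
      have vn: "v \<le> n" using x bn by (simp add: b_def)
      have le: "t x \<le> v" using pre[OF vn _ x(1)] x by simp
      have ge1: "1 \<le> t x" using trange[OF x(1)] by simp
      show "t x = v"
      proof (rule ccontr)
        assume "t x \<noteq> v"
        then have lt: "t x < v" using le by simp
        define z where "z = the_inv_into D ini (t x)"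
        have z: "z \<in> D" "ini z = t x" using inii[of "t x"] ge1 lt vn unfolding z_def by auto
        have "t z = t x" using less[OF lt] z x lt by auto
        then have "z = x" using tinj z x by (auto simp: inj_on_def)
        then show False using z x lt by simp
      qed
    qed
  qed
  have high: "t x = ini x" if x: "x \<in> D" "b < ini x" for x
  proof -
    define k where "k = ini x"
    have kn: "k \<le> n" using inib x unfolding k_def by (auto simp: bij_betw_def)
    have le: "t x \<le> k" using pre[OF kn _ x(1)] x unfolding k_def by simp
    define P where "P = {y\<in>D. ini y \<le> k - 1}"
    have "t ` P \<subseteq> {1..k-1}" using pre[of "k-1"] kn x trange unfolding P_def k_def by fastforce
    moreover have "card (t ` P) = k - 1"
    proof -
      have "card P = k - 1" using prefix_card[OF n, of "k-1"] kn unfolding P_def D_def ini_def by simp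
      moreover have "inj_on t P" using tinj by (rule inj_on_subset) (auto simp: P_def)
      ultimately show ?thesis by (simp add: card_image)
    qed
    ultimately have tP: "t ` P = {1..k-1}" by (intro card_subset_eq) auto
    show ?thesis
    proof (rule ccontr)
      assume "t x \<noteq> ini x"
      then have "t x \<in> {1..k-1}" using le trange[OF x(1)] unfolding k_def by auto
      then obtain y where y: "y \<in> P" "t y = t x" using tP by (metis imageE)
      then have "y = x" using tinj x by (auto simp: inj_on_def P_def)
      then show False using y x by (auto simp: P_def k_def)
    qed
  qed
  have tbelt: "a0 \<le> t x \<and> t x \<le> b" if bx: "belt x" for x
  proof -
    have xD: "x \<in> D" using bx by (simp add: belt_def)
    define z where "z = the_inv_into D ini (t x)"
    have z: "z \<in> D" "ini z = t x" using inii[of "t x"] trange[OF xD] unfolding z_def by auto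
    show ?thesis
    proof (rule ccontr)
      assume "\<not> (a0 \<le> t x \<and> t x \<le> b)"
      then have "ini z < a0 \<or> b < ini z" using z by auto
      then have "t z = ini z" using low[of "ini z"] z high[of z] by auto
      then have "z = x" using tinj z xD by (auto simp: inj_on_def)
      then show False using ini_belt[OF bx] z \<open>\<not> (a0 \<le> t x \<and> t x \<le> b)\<close> by simp
    qed
  qed
  have rs_nth: "res_seq kappa lam n f ! (v - 1) = node_res kappa (the_inv_into D f v)"
    if "v \<in> {1..n}" for f v
  proof -
    have "v - 1 < length [1..<n+1]" using that by (simp del: upt_Suc, linarith)
    then show ?thesis using that by (simp add: res_seq_def D_def del: upt_Suc)
  qed
  have ginv: "node_res kappa (the_inv_into D g v) = nat \<bar>kappa + int (v - a0) - int r\<bar>"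
    if v: "a0 \<le> v" "v \<le> b" for v
  proof (cases "v < a0 + c")
    case True
    define y where "y = (r+1, v - a0 + 1)"
    have yD: "y \<in> D" "g y = v" using D1[of "v - a0 + 1"] g1[of "v - a0 + 1"] True v unfolding y_def by auto
    have "the_inv_into D g v = y" using the_inv_into_f_f[OF ginj yD(1)] yD(2) by simp
    then show ?thesis using v by (simp add: y_def node_res_def algebra_simps of_nat_diff)
  next
    case False
    define y where "y = (r, v - a0)"
    have yD: "y \<in> D" "g y = v" using D2[of "v - a0"] g2[of "v - a0"] False v unfolding y_def b_def by auto
    have "the_inv_into D g v = y" using the_inv_into_f_f[OF ginj yD(1)] yD(2) by simp
    then show ?thesis using v by (simp add: y_def node_res_def algebra_simps of_nat_diff)
  qed
  have key: "\<bar>kappa + int (snd x) - int (fst x)\<bar> = \<bar>kappa + int (t x - a0) - int r\<bar>" if bx: "belt x" for x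
  proof -
    have xD: "x \<in> D" using bx by (simp add: belt_def)
    have "node_res kappa x = node_res kappa (the_inv_into D t (t x))"
      using the_inv_into_f_f[OF tinj xD] by simp
    also have "\<dots> = node_res kappa (the_inv_into D g (t x))"
      using rs_nth[of "t x" t] rs_nth[of "t x" g] trange[OF xD] res by (simp add: g_def)
    also have "\<dots> = nat \<bar>kappa + int (t x - a0) - int r\<bar>" using ginv tbelt[OF bx] by simp
    finally show ?thesis by (simp add: node_res_def)
  qed
  define Y where "Y l = t (r+1, l) - a0" for l
  define X where "X j = t (r, j) - a0" for j
  have belt1: "belt (r+1, l)" if "1 \<le> l" "l \<le> c" for l using D1[OF that] that by (simp add: belt_def)
  have belt2: "belt (r, j)" if "c \<le> j" "j \<le> N" for j using D2[OF that] that by (simp add: belt_def)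
  have tY: "t (r+1, l) = a0 + Y l \<and> Y l \<le> N" if "1 \<le> l" "l \<le> c" for l
    using tbelt[OF belt1[OF that]] unfolding Y_def b_def by (simp, linarith)
  have tX: "t (r, j) = a0 + X j \<and> X j \<le> N" if "c \<le> j" "j \<le> N" for j
    using tbelt[OF belt2[OF that]] unfolding X_def b_def by (simp, linarith)
  have incY: "Y i < Y j" if "1 \<le> i" "i < j" "j \<le> c" for i j
  proof -
    have "t (r+1, i) < t (r+1, j)"
      using rs[unfolded row_strict_def, rule_format, of "r+1" i j] D1[of i] D1[of j] that unfolding D_def by simp
    then show ?thesis using tY[of i] tY[of j] that by simp
  qed
  have incX: "X i < X j" if "c \<le> i" "i < j" "j \<le> N" for i j
  proof -
    have "t (r, i) < t (r, j)"
      using rs[unfolded row_strict_def, rule_format, of r i j] D2[of i] D2[of j] that unfolding D_def by simp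
    then show ?thesis using tX[of i] tX[of j] that by simp
  qed
  have dist: "Y l \<noteq> X j" if "1 \<le> l" "l \<le> c" "c \<le> j" "j \<le> N" for l j
  proof
    assume "Y l = X j"
    then have "t (r+1, l) = t (r, j)" using tY[of l] tX[of j] that by simp
    from inj_onD[OF tinj this D1[of l] D2[of j]] that show False by simp
  qed
  have resY: "\<bar>kappa + int l - int (r+1)\<bar> = \<bar>kappa + int (Y l) - int r\<bar>" if "1 \<le> l" "l \<le> c" for l
    using key[OF belt1[OF that]] tY[OF that] by simp
  have resX: "\<bar>kappa + int j - int r\<bar> = \<bar>kappa + int (X j) - int r\<bar>" if "c \<le> j" "j \<le> N" for j
    using key[OF belt2[OF that]] tX[OF that] by simp
  have Ya: "l - 1 \<le> Y l" if "1 \<le> l" "l \<le> c" for l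
    using incr_gap[of 1 c Y 1 l] incY that by simp
  have Xb: "X j \<le> j" if "c \<le> j" "j \<le> N" for j
  proof -
    have "X j + (N - j) \<le> X N" using incr_gap[of c N X j N] incX that by blast
    moreover have "X N \<le> N" using tX[of N] rc by simp
    ultimately show ?thesis using that by linarith
  qed
  have Yall: "Y l = l - 1" if Yc: "Y c = c - 1" and l: "1 \<le> l" "l \<le> c" for l
    using incr_gap[of 1 c Y l c] incY Ya[OF l] Yc l by simp
  have Xall: "X j = j" if Xc: "X c = c" and j: "c \<le> j" "j \<le> N" for j
    using incr_gap[of c N X c j] incX Xb[OF j] Xc j by simp
  have Yc: "Y c = c - 1 \<and> X c = c"
  proof (rule ccontr)
    assume H: "\<not> (Y c = c - 1 \<and> X c = c)"
    have y1: "c - 1 \<le> Y c" "Y c \<le> N" using Ya[of c] tY[of c] rc by auto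
    have x1: "X c \<le> c" using Xb[of c] rc by simp
    have ry: "\<bar>kappa + int c - int (r+1)\<bar> = \<bar>kappa + int (Y c) - int r\<bar>" using resY[of c] rc by simp
    have rx: "\<bar>kappa + int c - int r\<bar> = \<bar>kappa + int (X c) - int r\<bar>" using resX[of c] rc by simp
    consider "Y c \<noteq> c - 1" "X c \<noteq> c" | "Y c \<noteq> c - 1" "X c = c" | "Y c = c - 1" "X c \<noteq> c"
      using H by blast
    then show False
    proof cases
      case 1
      have "int (Y c) \<noteq> int c - 1" using 1(1) rc(3) by arith
      then have e1: "kappa + int (Y c) - int r = - (kappa + int c - int (r+1))"
        using absd[OF ry] by linarith
      have "int (X c) \<noteq> int c" using 1(2) by simp
      then have e2: "kappa + int (X c) - int r = - (kappa + int c - int r)"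
        using absd[OF rx] by linarith
      have "int (Y c) = int (X c) + 1" using e1 e2 by linarith
      then have "Y c = c" using y1 x1 1 by linarith
      then have "int (Y c) = int c" by simp
      then have "2 * (kappa - int r) = - (2 * int c - 1)" using e1 by (simp add: algebra_simps)
      then show False by presburger
    next
      case 2
      have cy: "c \<le> Y c" using y1 2(1) by arith
      have "X (Y c) = Y c" using Xall[OF 2(2) cy y1(2)] .
      then show False using dist[of c "Y c"] y1(2) cy rc by simp
    next
      case 3
      have cx: "X c + 1 \<le> c" using x1 3(2) by arith
      have "Y (X c + 1) = X c" using Yall[OF 3(1), of "X c + 1"] cx by simp
      then show False using dist[of "X c + 1" c] cx rc by simp
    qed
  qed
  show ?thesis
    unfolding g_def[symmetric]
  proof (rule ext)
    fix x
    show "t x = g x"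
    proof (cases "x \<in> D")
      case False
      then show ?thesis using toff g3[of x] by (simp add: belt_def ini_def init_tab_def D_def)
    next
      case True
      obtain r' c' where x: "x = (r', c')" by (cases x)
      show ?thesis
      proof (cases "belt x")
        case bx: True
        then consider "r' = r + 1" "1 \<le> c'" "c' \<le> c" | "r' = r" "c \<le> c'" "c' \<le> N"
          using rc unfolding belt_def x by (auto simp: D_def diag_iff N_def)
        then show ?thesis
        proof cases
          case 1
          then show ?thesis using tY[of c'] Yall[of c'] Yc g1[of c'] x by simp
        next
          case 2
          then show ?thesis using tX[of c'] Xall[of c'] Yc g2[of c'] x by simp
        qed
      next
        case nb: False
        then show ?thesis using ini_nb[OF True nb] low[of "ini x"] high[of x] True g3[OF nb] by auto
      qed
    qed
  qed
qed

theorem mainTheorem15: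
  fixes lam :: "nat list" and n :: nat and kappa :: int and A :: "nat \<times> nat"
  assumes "is_partition lam n"
    and "garnir_node lam A"
  shows "\<not> (\<exists>t. tableau lam n t \<and> row_strict lam t
               \<and> tab_dom_strict lam n t (garnir_tab lam A)
               \<and> res_seq kappa lam n t = res_seq kappa lam n (garnir_tab lam A))"
proof
  assume "\<exists>t. tableau lam n t \<and> row_strict lam t
               \<and> tab_dom_strict lam n t (garnir_tab lam A)
               \<and> res_seq kappa lam n t = res_seq kappa lam n (garnir_tab lam A)"
  then obtain t where t: "tableau lam n t" "row_strict lam t" "tab_dom_strict lam n t (garnir_tab lam A)"
    "res_seq kappa lam n t = res_seq kappa lam n (garnir_tab lam A)" by blast
  obtain r c where A: "A = (r, c)" by (cases A)
  have n: "sum_list lam = n" using assms(1) by (simp add: is_partition_def)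
  have "t = garnir_tab lam (r, c)"
    using main[OF n assms(2)[unfolded A] t(1,2) _ t(4)[unfolded A]] t(3) A by (simp add: tab_dom_strict_def)
  then show False using t(3) A by (simp add: tab_dom_strict_def)
qed

end
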